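(* Let $k,r,h$ be positive integers with $r\mid(k+h)$. Let $m$ be the smallest integer such that $n=k+h+\frac{k+h}{r}\le 2^m-1$. Then there exists a maximally recoverable local $(k,r,h)$-code over the field $\mathbb{F}_{2^{hm}}$.
   Context: For positive integers $k,r,h$ with $r\mid(k+h)$, a local $(k,r,h)$-code over a finite field $\mathbb{F}$ is a linear systematic code of dimension $k$ and length $n=k+h+\frac{k+h}{r}$ consisting of $k$ data symbols, $h$ heavy parity symbols (each a fixed $\mathbb{F}$-linear combination of all data symbols), and, after partitioning the $k+h$ data and heavy parity symbols into $\frac{k+h}{r}$ groups of size $r$, one local parity per group equal to the sum (XOR) of the $r$ symbols of that group. A local group is such a group together with its local parity. The code is maximally recoverable if for every set $E$ of coordinates obtained by picking exactly one coordinate from each local group, puncturing the code in $E$ (deleting those coordinates) yields a maximum distance separable $[k+h,k]$ code (minimum distance $h+1$). *)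

theory Defs
  imports Main
begin

text \<open>Coordinates of a local (k,r,h)-code: 0..<k are data symbols, k..<k+h heavy parities,
  k+h..<n local parities, n = k+h+(k+h)/r. The partition of the k+h data and heavy parity
  symbols into (k+h)/r groups is given by a map g (group index of each symbol);
  the heavy parities are given by a coefficient matrix H (heavy parity t = sum_j H t j * x j).\<close>

definition code_length :: "nat \<Rightarrow> nat \<Rightarrow> nat \<Rightarrow> nat" where
  "code_length k r h = k + h + (k + h) div r"

definition valid_partition :: "nat \<Rightarrow> nat \<Rightarrow> nat \<Rightarrow> (nat \<Rightarrow> nat) \<Rightarrow> bool" where
  "valid_partition k r h g \<longleftrightarrow>
     (\<forall>j<k+h. g j < (k + h) div r) \<and>
     (\<forall>l<(k + h) div r. card {j. j < k + h \<and> g j = l} = r)"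

definition dh_symbol :: "nat \<Rightarrow> nat \<Rightarrow> (nat \<Rightarrow> nat \<Rightarrow> 'a::field) \<Rightarrow> (nat \<Rightarrow> 'a) \<Rightarrow> nat \<Rightarrow> 'a" where
  "dh_symbol k h H x i = (if i < k then x i else (\<Sum>j<k. H (i - k) j * x j))"

text \<open>Encoding map of the local code: codeword of the message x (only x 0..x (k-1) matter).\<close>
definition lrc_encode :: "nat \<Rightarrow> nat \<Rightarrow> nat \<Rightarrow> (nat \<Rightarrow> nat \<Rightarrow> 'a::field) \<Rightarrow> (nat \<Rightarrow> nat)
    \<Rightarrow> (nat \<Rightarrow> 'a) \<Rightarrow> nat \<Rightarrow> 'a" where
  "lrc_encode k r h H g x i =
     (if i < k + h then dh_symbol k h H x i
      else if i < code_length k r h then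
        (\<Sum>j\<in>{j. j < k + h \<and> g j = i - (k + h)}. dh_symbol k h H x j)
      else 0)"

definition local_group :: "nat \<Rightarrow> nat \<Rightarrow> (nat \<Rightarrow> nat) \<Rightarrow> nat \<Rightarrow> nat set" where
  "local_group k h g l = {j. j < k + h \<and> g j = l} \<union> {k + h + l}"

definition nonzero_message :: "nat \<Rightarrow> (nat \<Rightarrow> 'a::zero) \<Rightarrow> bool" where
  "nonzero_message k x \<longleftrightarrow> (\<exists>j<k. x j \<noteq> 0)"

definition punctured_weight :: "nat \<Rightarrow> nat \<Rightarrow> nat \<Rightarrow> (nat \<Rightarrow> nat \<Rightarrow> 'a::field) \<Rightarrow> (nat \<Rightarrow> nat)
    \<Rightarrow> nat set \<Rightarrow> (nat \<Rightarrow> 'a) \<Rightarrow> nat" where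
  "punctured_weight k r h H g E x =
     card {i. i < code_length k r h \<and> i \<notin> E \<and> lrc_encode k r h H g x i \<noteq> 0}"

text \<open>The code punctured in E is an MDS [k+h,k] code: the encoding restricted to the
  remaining coordinates is injective on messages (dimension k), and the minimum distance
  (minimum weight of a nonzero codeword of the linear code) equals h+1.\<close>
definition punctured_MDS :: "nat \<Rightarrow> nat \<Rightarrow> nat \<Rightarrow> (nat \<Rightarrow> nat \<Rightarrow> 'a::field) \<Rightarrow> (nat \<Rightarrow> nat)
    \<Rightarrow> nat set \<Rightarrow> bool" where
  "punctured_MDS k r h H g E \<longleftrightarrow>
     (\<forall>x. nonzero_message k x \<longrightarrow>
        (\<exists>i. i < code_length k r h \<and> i \<notin> E \<and> lrc_encode k r h H g x i \<noteq> 0)) \<and>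
     (\<forall>x. nonzero_message k x \<longrightarrow> punctured_weight k r h H g E x \<ge> h + 1) \<and>
     (\<exists>x. nonzero_message k x \<and> punctured_weight k r h H g E x = h + 1)"

definition maximally_recoverable :: "nat \<Rightarrow> nat \<Rightarrow> nat \<Rightarrow> (nat \<Rightarrow> nat \<Rightarrow> 'a::field) \<Rightarrow> (nat \<Rightarrow> nat)
    \<Rightarrow> bool" where
  "maximally_recoverable k r h H g \<longleftrightarrow>
     (\<forall>E. E \<subseteq> {..<code_length k r h} \<and>
          (\<forall>l<(k + h) div r. card (E \<inter> local_group k h g l) = 1)
          \<longrightarrow> punctured_MDS k r h H g E)"

end

theory Submission
  imports Defs "HOL-Computational_Algebra.Polynomial" "HOL-Library.FuncSet"
begin


section \<open>Characteristic two\<close>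

lemma c2_add_self: fixes x :: "'a::field" assumes c2: "1 + 1 = (0::'a)" shows "x + x = 0"
proof -
  have "x + x = (1 + 1) * x" by (simp add: algebra_simps)
  thus ?thesis using c2 by simp
qed

lemma c2_minus: fixes x :: "'a::field" assumes c2: "1 + 1 = (0::'a)" shows "- x = x"
  using c2_add_self[OF c2, of x] by (simp add: add_eq_0_iff2 eq_neg_iff_add_eq_0)

lemma c2_diff: fixes x :: "'a::field" assumes c2: "1 + 1 = (0::'a)" shows "x - y = x + y"
  using c2_minus[OF c2, of y] by (metis diff_minus_eq_add)

lemma c2_frob1: fixes x :: "'a::field" assumes c2: "1 + 1 = (0::'a)"
  shows "(x + y) ^ 2 = x ^ 2 + y ^ 2"
proof -
  have "(x + y) ^ 2 = x^2 + y^2 + (x*y + x*y)" by (simp add: power2_eq_square algebra_simps)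
  thus ?thesis using c2_add_self[OF c2, of "x*y"] by simp
qed

lemma c2_frob: fixes x :: "'a::field" assumes c2: "1 + 1 = (0::'a)"
  shows "(x + y) ^ (2 ^ a) = x ^ (2 ^ a) + y ^ (2 ^ a)"
proof (induction a)
  case 0 then show ?case by simp
next
  case (Suc a)
  have "(x + y) ^ (2 ^ Suc a) = ((x + y) ^ (2 ^ a)) ^ 2" by (simp add: power_mult[symmetric] mult.commute)
  also have "\<dots> = (x ^ (2 ^ a)) ^ 2 + (y ^ (2 ^ a)) ^ 2" using Suc c2_frob1[OF c2] by simp
  also have "\<dots> = x ^ (2 ^ Suc a) + y ^ (2 ^ Suc a)" by (simp add: power_mult[symmetric] mult.commute)
  finally show ?case .
qed

lemma c2_frob_sum: fixes f :: "'b \<Rightarrow> 'a::field" assumes c2: "1 + 1 = (0::'a)"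
  shows "(sum f A) ^ (2 ^ a) = (\<Sum>j\<in>A. (f j) ^ (2 ^ a))"
proof (induction A rule: infinite_finite_induct)
  case (infinite A) then show ?case by simp
next
  case empty then show ?case by simp
next
  case (insert x F) then show ?case by (simp add: c2_frob[OF c2])
qed

lemma c2_of_nat: assumes c2: "1 + 1 = (0::'a::field)"
  shows "(of_nat n :: 'a) = (if even n then 0 else 1)"
proof (induction n)
  case 0 then show ?case by simp
next
  case (Suc n) then show ?case using c2 by (auto simp: add.commute)
qed

section \<open>Finite fields\<close>

lemma fin_fermat: fixes x :: "'a::{field,finite}" shows "x ^ card (UNIV :: 'a set) = x"
proof (cases "x = 0")
  case True then show ?thesis by (simp add: zero_power finite_UNIV_card_ge_0)
next
  case False
  let ?S = "UNIV - {0::'a}"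
  have bij: "bij_betw (\<lambda>y. x * y) ?S ?S"
    by (rule bij_betwI[where g="\<lambda>y. y / x"]) (use False in auto)
  have "(\<Prod>y\<in>?S. x * y) = (\<Prod>y\<in>?S. y)" using prod.reindex_bij_betw[OF bij, of "\<lambda>y. y"] by simp
  moreover have "(\<Prod>y\<in>?S. x * y) = x ^ card ?S * (\<Prod>y\<in>?S. y)" by (simp add: prod.distrib)
  moreover have "(\<Prod>y\<in>?S. y) \<noteq> 0" by simp
  ultimately have "x ^ card ?S = 1" by simp
  moreover have "card ?S = card (UNIV :: 'a set) - 1" by (simp add: card_Diff_subset)
  moreover have "card (UNIV :: 'a set) > 0" by (simp add: finite_UNIV_card_ge_0)
  ultimately show ?thesis by (metis Suc_pred' power_Suc mult_1_right)
qed

lemma fin_char: fixes x :: "'a::{field,finite}" shows "of_nat (card (UNIV :: 'a set)) * x = 0"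
proof -
  have bij: "bij_betw (\<lambda>y. x + y) UNIV UNIV"
    by (rule bij_betwI[where g="\<lambda>y. y - x"]) auto
  have "(\<Sum>y\<in>UNIV. x + y) = (\<Sum>y\<in>(UNIV::'a set). y)" using sum.reindex_bij_betw[OF bij, of "\<lambda>y. y"] by simp
  moreover have "(\<Sum>y\<in>(UNIV::'a set). x + y) = of_nat (card (UNIV :: 'a set)) * x + (\<Sum>y\<in>UNIV. y)" by (simp add: sum.distrib)
  ultimately show ?thesis by simp
qed

lemma fin_char2: assumes "card (UNIV :: 'a::{field,finite} set) = 2 ^ e" "e > 0" shows "1 + 1 = (0::'a)"
proof -
  have "(of_nat (2 ^ e) :: 'a) = 0" using fin_char[of "1::'a"] assms by simp
  hence "(of_nat 2 :: 'a) ^ e = 0" by (simp add: of_nat_power)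
  hence "(of_nat 2 :: 'a) = 0" by simp
  thus ?thesis by simp
qed

section \<open>Moore and Vandermonde column independence\<close>

lemma moore_aux:
  fixes \<beta> d :: "nat \<Rightarrow> 'a::field"
  assumes c2: "1 + 1 = (0::'a)"
  shows "card W = n \<Longrightarrow> finite W \<Longrightarrow> (\<forall>S\<subseteq>W. S \<noteq> {} \<longrightarrow> sum \<beta> S \<noteq> 0) \<Longrightarrow>
    (\<forall>i<n. (\<Sum>u\<in>W. d u * \<beta> u ^ (2 ^ i)) = 0) \<Longrightarrow> \<forall>u\<in>W. d u = 0"
proof (induction n arbitrary: W \<beta> d)
  case 0 then show ?case by simp
next
  case (Suc n)
  then obtain w0 where w0: "w0 \<in> W" by (metis card.empty ex_in_conv nat.distinct(1))
  define W' where "W' = W - {w0}"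
  define \<gamma> where "\<gamma> u = \<beta> u ^ 2 + \<beta> u * \<beta> w0" for u
  have cW': "card W' = n" using Suc.prems w0 by (simp add: W'_def)
  have fW': "finite W'" using Suc.prems by (simp add: W'_def)
  have bw0: "\<beta> w0 \<noteq> 0" using Suc.prems(3) w0 proof -
    have "sum \<beta> {w0} \<noteq> 0" using Suc.prems(3) w0 by blast
    thus ?thesis by simp
  qed
  have indep': "\<forall>S\<subseteq>W'. S \<noteq> {} \<longrightarrow> sum \<gamma> S \<noteq> 0"
  proof (intro allI impI)
    fix S assume S: "S \<subseteq> W'" "S \<noteq> {}"
    have fS: "finite S" using S fW' finite_subset by blast
    let ?\<sigma> = "sum \<beta> S"
    have "sum \<gamma> S = ?\<sigma> ^ 2 + ?\<sigma> * \<beta> w0"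
      using c2_frob_sum[OF c2, of \<beta> S 1] by (simp add: \<gamma>_def sum.distrib sum_distrib_right)
    also have "\<dots> = ?\<sigma> * (?\<sigma> + \<beta> w0)" by (simp add: power2_eq_square algebra_simps)
    also have "?\<sigma> + \<beta> w0 = sum \<beta> (insert w0 S)" using S fS by (subst sum.insert) (auto simp: W'_def add.commute)
    finally show "sum \<gamma> S \<noteq> 0" using Suc.prems(3) S w0 fS
      by (metis (no_types, lifting) W'_def Diff_subset dual_order.trans insert_not_empty insert_subset mult_eq_0_iff)
  qed
  have eq': "\<forall>i<n. (\<Sum>u\<in>W'. d u * \<gamma> u ^ (2 ^ i)) = 0"
  proof (intro allI impI)
    fix i assume i: "i < n"
    have g: "\<gamma> u ^ (2 ^ i) = \<beta> u ^ (2 ^ Suc i) + \<beta> w0 ^ (2 ^ i) * \<beta> u ^ (2 ^ i)" for u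
      by (simp add: \<gamma>_def c2_frob[OF c2] power_mult_distrib power_mult[symmetric] mult.commute)
    have "(\<Sum>u\<in>W. d u * \<gamma> u ^ (2 ^ i)) = (\<Sum>u\<in>W. d u * \<beta> u ^ (2 ^ Suc i)) + \<beta> w0 ^ (2 ^ i) * (\<Sum>u\<in>W. d u * \<beta> u ^ (2 ^ i))"
      by (simp add: g sum.distrib sum_distrib_left algebra_simps)
    also have "\<dots> = 0"
    proof -
      have A: "(\<Sum>u\<in>W. d u * \<beta> u ^ (2 ^ Suc i)) = 0" by (rule Suc.prems(4)[rule_format]) (use i in simp)
      have B: "(\<Sum>u\<in>W. d u * \<beta> u ^ (2 ^ i)) = 0" by (rule Suc.prems(4)[rule_format]) (use i in simp)
      show ?thesis by (simp only: A B) simp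
    qed
    finally have "(\<Sum>u\<in>W. d u * \<gamma> u ^ (2 ^ i)) = 0" .
    moreover have "\<gamma> w0 = 0" using c2_add_self[OF c2] by (simp add: \<gamma>_def power2_eq_square)
    ultimately show "(\<Sum>u\<in>W'. d u * \<gamma> u ^ (2 ^ i)) = 0"
      using sum.remove[OF Suc.prems(2) w0, of "\<lambda>u. d u * \<gamma> u ^ (2 ^ i)"] w0
      by (simp add: W'_def zero_power)
  qed
  have z': "\<forall>u\<in>W'. d u = 0" using Suc.IH[OF cW' fW' indep' eq'] .
  have "(\<Sum>u\<in>W. d u * \<beta> u ^ (2 ^ 0)) = 0" by (rule Suc.prems(4)[rule_format]) simp
  hence "d w0 * \<beta> w0 + (\<Sum>u\<in>W'. d u * \<beta> u) = 0"
    using sum.remove[OF Suc.prems(2) w0, of "\<lambda>u. d u * \<beta> u"] by (simp add: W'_def)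
  hence "d w0 * \<beta> w0 = 0" using z' by simp
  hence "d w0 = 0" using bw0 by simp
  then show ?case using z' W'_def by auto
qed

lemma moore:
  fixes \<beta> d :: "nat \<Rightarrow> 'a::field"
  assumes c2: "1 + 1 = (0::'a)" and "finite W" and "\<forall>S\<subseteq>W. S \<noteq> {} \<longrightarrow> sum \<beta> S \<noteq> 0"
    and "\<forall>i<card W. (\<Sum>u\<in>W. d u * \<beta> u ^ (2 ^ i)) = 0"
  shows "\<forall>u\<in>W. d u = 0"
  using moore_aux[OF c2 refl] assms by blast

lemma vdm_aux:
  fixes \<gamma> d :: "nat \<Rightarrow> 'a::field"
  shows "card W = n \<Longrightarrow> finite W \<Longrightarrow> inj_on \<gamma> W \<Longrightarrow> (\<forall>u\<in>W. \<gamma> u \<noteq> 0) \<Longrightarrow>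
    (\<forall>t. 1 \<le> t \<and> t \<le> n \<longrightarrow> (\<Sum>u\<in>W. d u * \<gamma> u ^ t) = 0) \<Longrightarrow> \<forall>u\<in>W. d u = 0"
proof (induction n arbitrary: W d)
  case 0 then show ?case by simp
next
  case (Suc n)
  then obtain w0 where w0: "w0 \<in> W" by (metis card.empty ex_in_conv nat.distinct(1))
  define W' where "W' = W - {w0}"
  define d' where "d' u = d u * (\<gamma> u - \<gamma> w0)" for u
  have cW': "card W' = n" using Suc.prems w0 by (simp add: W'_def)
  have fW': "finite W'" using Suc.prems by (simp add: W'_def)
  have eq': "\<forall>t. 1 \<le> t \<and> t \<le> n \<longrightarrow> (\<Sum>u\<in>W'. d' u * \<gamma> u ^ t) = 0"
  proof (intro allI impI)
    fix t assume t: "1 \<le> t \<and> t \<le> n"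
    have "(\<Sum>u\<in>W. d' u * \<gamma> u ^ t) = (\<Sum>u\<in>W. d u * \<gamma> u ^ Suc t) - \<gamma> w0 * (\<Sum>u\<in>W. d u * \<gamma> u ^ t)"
      by (simp add: d'_def sum_subtractf sum_distrib_left algebra_simps)
    also have "\<dots> = 0"
    proof -
      have A: "(\<Sum>u\<in>W. d u * \<gamma> u ^ Suc t) = 0" by (rule Suc.prems(5)[rule_format]) (use t in simp)
      have B: "(\<Sum>u\<in>W. d u * \<gamma> u ^ t) = 0" by (rule Suc.prems(5)[rule_format]) (use t in simp)
      show ?thesis by (simp only: A B) simp
    qed
    finally show "(\<Sum>u\<in>W'. d' u * \<gamma> u ^ t) = 0"
      using sum.remove[OF Suc.prems(2) w0, of "\<lambda>u. d' u * \<gamma> u ^ t"] by (simp add: W'_def d'_def)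
  qed
  have inj': "inj_on \<gamma> W'" using Suc.prems(3) by (simp add: W'_def inj_on_diff)
  have z': "\<forall>u\<in>W'. d' u = 0" using Suc.IH[OF cW' fW' inj' _ eq'] Suc.prems(4) by (simp add: W'_def)
  have z'': "\<forall>u\<in>W'. d u = 0"
  proof
    fix u assume u: "u \<in> W'"
    have "\<gamma> u \<noteq> \<gamma> w0" using u w0 Suc.prems(3) by (auto simp: W'_def inj_on_def)
    thus "d u = 0" using z' u by (auto simp: d'_def)
  qed
  have "(\<Sum>u\<in>W. d u * \<gamma> u ^ 1) = 0" by (rule Suc.prems(5)[rule_format]) simp
  hence "d w0 * \<gamma> w0 + (\<Sum>u\<in>W'. d u * \<gamma> u) = 0"
    using sum.remove[OF Suc.prems(2) w0, of "\<lambda>u. d u * \<gamma> u"] by (simp add: W'_def)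
  hence "d w0 = 0" using z'' Suc.prems(4) w0 by simp
  then show ?case using z'' W'_def by auto
qed

lemma vdm:
  fixes \<gamma> d :: "nat \<Rightarrow> 'a::field"
  assumes "finite W" "inj_on \<gamma> W" "\<forall>u\<in>W. \<gamma> u \<noteq> 0"
    "\<forall>t. 1 \<le> t \<and> t \<le> card W \<longrightarrow> (\<Sum>u\<in>W. d u * \<gamma> u ^ t) = 0"
  shows "\<forall>u\<in>W. d u = 0"
  using vdm_aux[OF refl] assms by blast

section \<open>A subfield and a BCH-type family\<close>

lemma c2_telescope: fixes f :: "nat \<Rightarrow> 'a::field" assumes c2: "1 + 1 = (0::'a)"
  shows "(\<Sum>i<n. f (Suc i) + f i) = f n + f 0"
proof (induction n)
  case 0 then show ?case using c2_add_self[OF c2] by simp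
next
  case (Suc n)
  have "(\<Sum>i<Suc n. f (Suc i) + f i) = f n + f 0 + (f (Suc n) + f n)" using Suc by simp
  also have "\<dots> = f (Suc n) + f 0 + (f n + f n)" by (simp add: algebra_simps)
  finally show ?case using c2_add_self[OF c2, of "f n"] by simp
qed

lemma card_roots_K:
  fixes q :: nat assumes "q \<ge> 2"
  shows "card {x::'a::field. x ^ q = x} \<le> q"
proof -
  define p :: "'a poly" where "p = monom 1 q + [:0, -1:]"
  have dq: "degree [:0, -1::'a:] < degree (monom (1::'a) q)" using assms by (simp add: degree_monom_eq)
  have dp: "degree p = q" unfolding p_def using degree_add_eq_left[OF dq] assms by (simp add: degree_monom_eq)
  hence "p \<noteq> 0" using assms by auto
  moreover have "{x::'a. x ^ q = x} = {x. poly p x = 0}" by (auto simp: p_def poly_monom)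
  ultimately show ?thesis using card_poly_roots_bound[of p] dp by simp
qed

lemma card_roots_T:
  fixes q h :: nat assumes "q \<ge> 2" "h > 0"
  shows "card {y::'a::field. (\<Sum>i<h. y ^ (q ^ i)) = 0} \<le> q ^ (h - 1)"
proof -
  define R :: "'a poly" where "R = (\<Sum>i<h-1. monom 1 (q ^ i))"
  define p :: "'a poly" where "p = monom 1 (q ^ (h - 1)) + R"
  have "degree R \<le> q ^ (h - 1) - 1" unfolding R_def
  proof (rule degree_sum_le)
    fix i assume "i \<in> {..<h-1}"
    hence "q ^ i < q ^ (h - 1)" using assms by (simp add: power_strict_increasing)
    thus "degree (monom (1::'a) (q ^ i)) \<le> q ^ (h - 1) - 1" by (simp add: degree_monom_eq)
  qed simp
  moreover have "q ^ (h - 1) > 0" using assms by simp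
  ultimately have "degree R < q ^ (h - 1)" by arith
  hence dR: "degree R < degree (monom (1::'a) (q ^ (h - 1)))" by (simp add: degree_monom_eq)
  have dp: "degree p = q ^ (h - 1)" unfolding p_def using degree_add_eq_left[OF dR] by (simp add: degree_monom_eq)
  hence "p \<noteq> 0" using \<open>q ^ (h - 1) > 0\<close> by auto
  moreover have "(\<Sum>i<h. y ^ (q ^ i)) = poly p y" for y :: 'a
  proof -
    have "{..<h} = insert (h - 1) {..<h-1}" using assms by auto
    hence "(\<Sum>i<h. y ^ (q ^ i)) = y ^ (q ^ (h - 1)) + (\<Sum>i<h-1. y ^ (q ^ i))" by simp
    thus ?thesis by (simp add: p_def R_def poly_sum poly_monom)
  qed
  ultimately show ?thesis using card_poly_roots_bound[of p] dp by simp
qed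

lemma K_big:
  fixes h m :: nat
  assumes card: "card (UNIV::'a::{field,finite} set) = 2 ^ (h * m)" and h: "h > 0" and m: "m > 0"
  shows "card {x::'a. x ^ (2 ^ m) = x} \<ge> 2 ^ m"
proof -
  have c2: "1 + 1 = (0::'a)" using fin_char2[OF card] h m by simp
  define q :: nat where "q = 2 ^ m"
  have q2: "q \<ge> 2" using m unfolding q_def by (metis One_nat_def Suc_leI power_increasing numeral_2_eq_2 power_one_right one_le_numeral)
  define K where "K = {x::'a. x ^ q = x}"
  define \<phi> where "\<phi> x = x ^ q + x" for x :: 'a
  have fr: "(x + y) ^ (q ^ i) = x ^ (q ^ i) + y ^ (q ^ i)" for x y :: 'a and i
    using c2_frob[OF c2, of x y "m * i"] by (simp add: q_def power_mult)
  have addphi: "\<phi> (x + y) = \<phi> x + \<phi> y" for x y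
    using fr[of x y 1] by (simp add: \<phi>_def algebra_simps)
  have Q: "card (UNIV::'a set) = q ^ h" by (simp add: card q_def power_mult[symmetric] mult.commute)
  have Tr: "(\<Sum>i<h. (\<phi> x) ^ (q ^ i)) = 0" for x
  proof -
    have "(\<Sum>i<h. (\<phi> x) ^ (q ^ i)) = (\<Sum>i<h. x ^ (q ^ Suc i) + x ^ (q ^ i))"
      by (rule sum.cong) (auto simp: \<phi>_def fr power_mult[symmetric] mult.commute)
    also have "\<dots> = x ^ (q ^ h) + x ^ (q ^ 0)" using c2_telescope[OF c2, of "\<lambda>i. x ^ (q ^ i)" h] by simp
    also have "x ^ (q ^ h) = x" using fin_fermat[of x] Q by simp
    finally show ?thesis using c2_add_self[OF c2, of x] by simp
  qed
  have rng: "card (range \<phi>) \<le> q ^ (h - 1)"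
  proof -
    have "range \<phi> \<subseteq> {y::'a. (\<Sum>i<h. y ^ (q ^ i)) = 0}" using Tr by auto
    hence "card (range \<phi>) \<le> card {y::'a. (\<Sum>i<h. y ^ (q ^ i)) = 0}" by (intro card_mono) auto
    thus ?thesis using card_roots_T[OF q2 h, where 'a='a] by simp
  qed
  have fib: "card {x. \<phi> x = y} = card K" if "y \<in> range \<phi>" for y
  proof -
    obtain x0 where y: "y = \<phi> x0" using \<open>y \<in> range \<phi>\<close> by auto
    have "{x. \<phi> x = y} = (\<lambda>z. z + x0) ` K"
    proof (intro equalityI subsetI)
      fix x assume "x \<in> {x. \<phi> x = y}"
      hence "\<phi> x = \<phi> x0" using y by simp
      hence "\<phi> (x - x0) + \<phi> x0 = \<phi> x0" using addphi[of "x - x0" x0] by simp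
      hence "\<phi> (x - x0) = 0" by simp
      hence "x - x0 \<in> K" unfolding K_def \<phi>_def using c2_minus[OF c2] by (simp add: add_eq_0_iff)
      thus "x \<in> (\<lambda>z. z + x0) ` K" by (intro image_eqI[of _ _ "x - x0"]) auto
    next
      fix x assume "x \<in> (\<lambda>z. z + x0) ` K"
      then obtain z where z: "z \<in> K" "x = z + x0" by auto
      have "\<phi> z = 0" using z c2_add_self[OF c2, of z] by (simp add: K_def \<phi>_def)
      thus "x \<in> {x. \<phi> x = y}" using z y addphi by simp
    qed
    moreover have "inj_on (\<lambda>z. z + x0) K" by (auto simp: inj_on_def)
    ultimately show ?thesis by (simp add: card_image)
  qed
  have "card (UNIV::'a set) = (\<Sum>y\<in>range \<phi>. card {x. \<phi> x = y})"
    using sum.group[of "UNIV::'a set" "range \<phi>" \<phi> "\<lambda>_. 1::nat"] by simp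
  also have "\<dots> = card (range \<phi>) * card K" using fib by simp
  also have "\<dots> \<le> q ^ (h - 1) * card K" using rng by simp
  finally have "q * q ^ (h - 1) \<le> q ^ (h - 1) * card K" using Q h
    by (metis Suc_diff_1 power_Suc)
  hence "q \<le> card K" using q2 by (simp add: mult.commute)
  thus ?thesis by (simp add: K_def q_def)
qed

definition spanK :: "'a::field set \<Rightarrow> nat \<Rightarrow> (nat \<Rightarrow> 'a) \<Rightarrow> 'a set" where
  "spanK K s \<omega> = (\<lambda>c. \<Sum>i<s. c i * \<omega> i) ` (PiE {..<s} (\<lambda>_. K))"

lemma spanK_cong: "(\<And>i. i < s \<Longrightarrow> \<omega> i = \<omega>' i) \<Longrightarrow> spanK K s \<omega> = spanK K s \<omega>'"
  unfolding spanK_def by (intro image_cong refl sum.cong) auto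

lemma omega_exists:
  fixes K :: "'a::{field,finite} set"
  assumes "card K ^ (h - 1) < card (UNIV::'a set)" and Kne: "K \<noteq> {}"
  shows "\<exists>\<omega>. \<forall>s<h. \<omega> s \<notin> spanK K s \<omega>"
proof -
  have "n \<le> h \<Longrightarrow> \<exists>\<omega>. \<forall>s<n. \<omega> s \<notin> spanK K s \<omega>" for n
  proof (induction n)
    case 0 then show ?case by simp
  next
    case (Suc n)
    then obtain \<omega> where \<omega>: "\<forall>s<n. \<omega> s \<notin> spanK K s \<omega>" by auto
    have "card (spanK K n \<omega>) \<le> card (PiE {..<n} (\<lambda>_. K))" unfolding spanK_def by (intro card_image_le finite_PiE) auto
    also have "\<dots> = card K ^ n" by (simp add: card_PiE)
    also have "\<dots> \<le> card K ^ (h - 1)"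
    proof -
      have "card K \<ge> 1" using Kne by (simp add: Suc_le_eq card_gt_0_iff)
      thus ?thesis using Suc.prems by (intro power_increasing) auto
    qed
    finally have "card (spanK K n \<omega>) < card (UNIV::'a set)" using assms by simp
    then obtain z where z: "z \<notin> spanK K n \<omega>"
      by (metis UNIV_I card_mono finite subsetI leD)
    define \<omega>' where "\<omega>' = \<omega>(n := z)"
    have "\<forall>s<Suc n. \<omega>' s \<notin> spanK K s \<omega>'"
    proof (intro allI impI)
      fix s assume s: "s < Suc n"
      have sp: "spanK K s \<omega>' = spanK K s \<omega>" by (rule spanK_cong) (use s in \<open>auto simp: \<omega>'_def\<close>)
      show "\<omega>' s \<notin> spanK K s \<omega>'"
      proof (cases "s = n")
        case True thus ?thesis using sp z by (simp add: \<omega>'_def)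
      next
        case False thus ?thesis using sp \<omega> s by (simp add: \<omega>'_def)
      qed
    qed
    thus ?case by blast
  qed
  thus ?thesis by blast
qed

lemma omega_indep:
  fixes K :: "'a::field set"
  assumes c2: "1 + 1 = (0::'a)" and Kdiv: "\<And>x y. x \<in> K \<Longrightarrow> y \<in> K \<Longrightarrow> x / y \<in> K"
    and \<omega>: "\<forall>s<n. \<omega> s \<notin> spanK K s \<omega>"
  shows "(\<forall>s<n. c s \<in> K) \<Longrightarrow> (\<Sum>s<n. c s * \<omega> s) = 0 \<Longrightarrow> \<forall>s<n. c s = 0"
  using \<omega>
proof (induction n)
  case 0 then show ?case by simp
next
  case (Suc n)
  have cn: "c n = 0"
  proof (rule ccontr)
    assume cn: "c n \<noteq> 0"
    have "c n * \<omega> n + (\<Sum>s<n. c s * \<omega> s) = 0" using Suc.prems(2) by (simp add: add.commute)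
    hence "c n * \<omega> n = (\<Sum>s<n. c s * \<omega> s)" using c2_minus[OF c2] by (metis add_eq_0_iff)
    hence "\<omega> n = (\<Sum>s<n. c s * \<omega> s) / c n" using cn by (simp add: field_simps)
    also have "\<dots> = (\<Sum>s<n. (restrict (\<lambda>s. c s / c n) {..<n}) s * \<omega> s)"
      unfolding sum_divide_distrib by (rule sum.cong) auto
    finally have "\<omega> n \<in> spanK K n \<omega>" unfolding spanK_def
      using Suc.prems(1) Kdiv by (intro image_eqI[where x="restrict (\<lambda>s. c s / c n) {..<n}"]) auto
    thus False using Suc.prems(3) by simp
  qed
  have "\<forall>s<n. c s = 0" using Suc.IH Suc.prems cn by simp
  thus ?case using cn less_Suc_eq by auto
qed

lemma alpha_exists:
  fixes h m N :: nat
  assumes card: "card (UNIV::'a::{field,finite} set) = 2 ^ (h * m)" and h: "h > 0" and m: "m > 0"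
    and N: "N < 2 ^ m"
  shows "\<exists>\<alpha>::nat \<Rightarrow> 'a. \<forall>A \<subseteq> {..<N}. A \<noteq> {} \<longrightarrow> card A \<le> 2 * h \<longrightarrow> sum \<alpha> A \<noteq> 0"
proof -
  have c2: "1 + 1 = (0::'a)" using fin_char2[OF card] h m by simp
  define q :: nat where "q = 2 ^ m"
  have q2: "q \<ge> 2" using m unfolding q_def by (metis One_nat_def Suc_leI power_increasing numeral_2_eq_2 power_one_right one_le_numeral)
  define K where "K = {x::'a. x ^ q = x}"
  have fr: "(x + y) ^ q = x ^ q + y ^ q" for x y :: 'a
    using c2_frob[OF c2, of x y m] by (simp add: q_def)
  have Kadd: "x \<in> K \<Longrightarrow> y \<in> K \<Longrightarrow> x + y \<in> K" for x y by (simp add: K_def fr)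
  have Kmul: "x \<in> K \<Longrightarrow> y \<in> K \<Longrightarrow> x * y \<in> K" for x y by (simp add: K_def power_mult_distrib)
  have Kpow: "x \<in> K \<Longrightarrow> x ^ t \<in> K" for x t
  proof -
    assume "x \<in> K"
    hence "x ^ q = x" by (simp add: K_def)
    hence "(x ^ t) ^ q = x ^ t" by (metis power_mult mult.commute)
    thus ?thesis by (simp add: K_def)
  qed
  have Kdiv: "x \<in> K \<Longrightarrow> y \<in> K \<Longrightarrow> x / y \<in> K" for x y by (simp add: K_def power_divide)
  have K0: "0 \<in> K" using q2 by (simp add: K_def)
  have Ksum: "(\<forall>j\<in>B. f j \<in> K) \<Longrightarrow> sum f B \<in> K" for f and B :: "nat set"
    by (induction B rule: infinite_finite_induct) (auto simp: K0 Kadd)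
  have cK1: "card K \<ge> q" using K_big[OF card h m] by (simp add: K_def q_def)
  have cK2: "card K \<le> q" using card_roots_K[OF q2, where 'a='a] by (simp add: K_def)
  have cK: "card K = q" using cK1 cK2 by simp
  have "card (K - {0}) = q - 1" using cK K0 by (simp add: card_Diff_subset)
  hence "card {..<N} \<le> card (K - {0})" using N by (simp add: q_def)
  then obtain \<gamma> where \<gamma>: "\<gamma> ` {..<N} \<subseteq> K - {0}" "inj_on \<gamma> {..<N}"
    using card_le_inj[of "{..<N}" "K - {0}"] by auto
  have "card K ^ (h - 1) < card (UNIV::'a set)"
  proof -
    have "q ^ (h - 1) < q ^ h" using h q2 by (intro power_strict_increasing) auto
    moreover have "card (UNIV::'a set) = q ^ h" by (simp add: card q_def power_mult[symmetric] mult.commute)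
    ultimately show ?thesis using cK by simp
  qed
  then obtain \<omega> where \<omega>: "\<forall>s<h. \<omega> s \<notin> spanK K s \<omega>" using omega_exists[of K h] K0 by blast
  define \<alpha> where "\<alpha> j = (\<Sum>s<h. \<omega> s * \<gamma> j ^ (2 * s + 1))" for j
  have "\<forall>A \<subseteq> {..<N}. A \<noteq> {} \<longrightarrow> card A \<le> 2 * h \<longrightarrow> sum \<alpha> A \<noteq> 0"
  proof (intro allI impI)
    fix A assume A: "A \<subseteq> {..<N}" "A \<noteq> {}" "card A \<le> 2 * h"
    have fA: "finite A" using A(1) finite_subset by blast
    define p where "p t = (\<Sum>j\<in>A. \<gamma> j ^ t)" for t
    have pK: "p t \<in> K" for t unfolding p_def using A(1) \<gamma>(1) by (intro Ksum ballI Kpow) auto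
    show "sum \<alpha> A \<noteq> 0"
    proof
      assume z: "sum \<alpha> A = 0"
      have "sum \<alpha> A = (\<Sum>s<h. p (2 * s + 1) * \<omega> s)"
        unfolding \<alpha>_def p_def by (subst sum.swap) (simp add: sum_distrib_left sum_distrib_right mult.commute)
      hence "(\<Sum>s<h. p (2 * s + 1) * \<omega> s) = 0" using z by simp
      hence odd0: "\<forall>s<h. p (2 * s + 1) = 0"
        using omega_indep[OF c2 Kdiv \<omega>, of "\<lambda>s. p (2 * s + 1)"] pK by blast
      have all0: "1 \<le> t \<and> t \<le> 2 * h \<longrightarrow> p t = 0" for t
      proof (induction t rule: less_induct)
        case (less t)
        show ?case
        proof (intro impI)
          assume t: "1 \<le> t \<and> t \<le> 2 * h"
          show "p t = 0"
          proof (cases "even t")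
            case True
            then obtain t' where t': "t = 2 * t'" by auto
            have "p t = (p t') ^ (2 ^ 1)" unfolding p_def using c2_frob_sum[OF c2, of "\<lambda>j. \<gamma> j ^ t'" A 1]
              by (simp add: t' power_mult[symmetric] mult.commute)
            moreover have "p t' = 0" using less.IH[of t'] t t' by simp
            ultimately show ?thesis by simp
          next
            case False
            then obtain s where s: "t = 2 * s + 1" by (metis oddE)
            thus ?thesis using odd0 t by simp
          qed
        qed
      qed
      have "\<forall>u\<in>A. (\<lambda>_. 1::'a) u = 0"
      proof (rule vdm[OF fA])
        show "inj_on \<gamma> A" using \<gamma>(2) A(1) inj_on_subset by blast
        show "\<forall>u\<in>A. \<gamma> u \<noteq> 0" using \<gamma>(1) A(1) by auto
        show "\<forall>t. 1 \<le> t \<and> t \<le> card A \<longrightarrow> (\<Sum>u\<in>A. 1 * \<gamma> u ^ t) = 0"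
          using all0 A(3) by (simp add: p_def)
      qed
      thus False using A(2) by auto
    qed
  qed
  thus ?thesis by blast
qed




lemma sum_split_add: "(\<Sum>j<k+h. (f::nat \<Rightarrow> 'b::comm_monoid_add) j) = (\<Sum>j<k. f j) + (\<Sum>t<h. f (k + t))"
  by (induction h) (auto simp: add.assoc)

lemma div_group_set:
  fixes r l :: nat assumes "r > 0"
  shows "{j. j div r = l} = {l * r..<l * r + r}"
proof (intro equalityI subsetI)
  fix j assume "j \<in> {j. j div r = l}"
  hence "j div r = l" by simp
  moreover have "j div r * r \<le> j" by simp
  moreover have "j < (j div r) * r + r"
  proof -
    have "j = j div r * r + j mod r" by simp
    moreover have "j mod r < r" using assms by simp
    ultimately show ?thesis by linarith
  qed
  ultimately show "j \<in> {l * r..<l * r + r}" by simp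
next
  fix j assume "j \<in> {l * r..<l * r + r}"
  hence "l * r \<le> j" "j < l * r + r" by auto
  hence "j div r = l" using assms by (intro div_nat_eqI) (auto simp: mult.commute)
  thus "j \<in> {j. j div r = l}" by simp
qed

lemma valid_div:
  assumes r: "r > 0" and dvd: "r dvd (k + h)"
  shows "valid_partition k r h (\<lambda>j. j div r)"
  unfolding valid_partition_def
proof (intro conjI allI impI)
  fix j assume "j < k + h"
  moreover obtain G where G: "k + h = r * G" using dvd by blast
  ultimately show "j div r < (k + h) div r" using r by (simp add: less_mult_imp_div_less mult.commute)
next
  fix l assume l: "l < (k + h) div r"
  obtain G where G: "k + h = r * G" using dvd by blast
  hence "l < G" using l r by simp
  hence "Suc l * r \<le> G * r" by (intro mult_le_mono1) simp
  hence "l * r + r \<le> k + h" using G by (simp add: mult.commute)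
  hence "{j. j < k + h \<and> j div r = l} = {l * r..<l * r + r}" using div_group_set[OF r, of l] by auto
  thus "card {j. j < k + h \<and> j div r = l} = r" by simp
qed

lemma dh_lin: "dh_symbol k h H (\<lambda>j. x j - y j) i = dh_symbol k h H x i - dh_symbol k h H y i"
  by (simp add: dh_symbol_def right_diff_distrib sum_subtractf)

lemma enc_lin: "lrc_encode k r h H g (\<lambda>j. x j - y j) i = lrc_encode k r h H g x i - lrc_encode k r h H g y i"
  by (simp add: lrc_encode_def dh_lin sum_subtractf)

lemma H_exists:
  fixes \<alpha> :: "nat \<Rightarrow> 'a::{field,finite}"
  assumes c2: "1 + 1 = (0::'a)"
    and bch: "\<forall>A \<subseteq> {..<k+h}. A \<noteq> {} \<longrightarrow> card A \<le> 2 * h \<longrightarrow> sum \<alpha> A \<noteq> 0"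
  shows "\<exists>H. \<forall>x. \<forall>i<h. (\<Sum>j<k+h. dh_symbol k h H x j * \<alpha> j ^ (2 ^ i)) = 0"
proof -
  define L where "L y = restrict (\<lambda>i. \<Sum>t<h. y t * \<alpha> (k + t) ^ (2 ^ i)) {..<h}" for y
  define P where "P = PiE {..<h} (\<lambda>_. UNIV::'a set)"
  have LyP: "L y \<in> P" for y unfolding L_def P_def by (simp only: restrict_PiE_iff) simp
  have LP: "L ` P \<subseteq> P" using LyP by blast
  have inj: "inj_on L P"
  proof (rule inj_onI)
    fix y1 y2 assume y: "y1 \<in> P" "y2 \<in> P" "L y1 = L y2"
    have eq: "\<forall>i<card {..<h}. (\<Sum>t\<in>{..<h}. (y1 t - y2 t) * \<alpha> (k + t) ^ (2 ^ i)) = 0"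
    proof (intro allI impI)
      fix i assume "i < card {..<h}"
      hence i: "i < h" by simp
      have "(\<Sum>t<h. y1 t * \<alpha> (k + t) ^ (2 ^ i)) = (\<Sum>t<h. y2 t * \<alpha> (k + t) ^ (2 ^ i))"
        using fun_cong[OF y(3), of i] i by (simp add: L_def)
      thus "(\<Sum>t\<in>{..<h}. (y1 t - y2 t) * \<alpha> (k + t) ^ (2 ^ i)) = 0"
        by (simp add: left_diff_distrib sum_subtractf)
    qed
    have ind: "\<forall>S\<subseteq>{..<h}. S \<noteq> {} \<longrightarrow> sum (\<lambda>t. \<alpha> (k + t)) S \<noteq> 0"
    proof (intro allI impI)
      fix S assume S: "S \<subseteq> {..<h}" "S \<noteq> {}"
      have "sum \<alpha> ((+) k ` S) = sum (\<lambda>t. \<alpha> (k + t)) S" by (simp add: sum.reindex)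
      moreover have "card ((+) k ` S) \<le> 2 * h"
      proof -
        have "card ((+) k ` S) = card S" by (rule card_image) (simp add: inj_on_def)
        moreover have "card S \<le> card {..<h}" by (rule card_mono) (use S in auto)
        ultimately show ?thesis by simp
      qed
      moreover have "(+) k ` S \<subseteq> {..<k+h}" using S by auto
      moreover have "(+) k ` S \<noteq> {}" using S by simp
      ultimately show "sum (\<lambda>t. \<alpha> (k + t)) S \<noteq> 0" using bch by metis
    qed
    have "\<forall>t\<in>{..<h}. y1 t - y2 t = 0" by (rule moore[OF c2 _ ind eq]) simp
    show "y1 = y2"
    proof (rule PiE_ext)
      show "y1 \<in> PiE {..<h} (\<lambda>_. UNIV)" using y(1) by (simp add: P_def)
      show "y2 \<in> PiE {..<h} (\<lambda>_. UNIV)" using y(2) by (simp add: P_def)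
      fix t assume "t \<in> {..<h}"
      thus "y1 t = y2 t" using \<open>\<forall>t\<in>{..<h}. y1 t - y2 t = 0\<close> by simp
    qed
  qed
  have fP: "finite P" by (simp add: P_def finite_PiE)
  have surj: "L ` P = P"
    using card_subset_eq[OF fP LP] card_image[OF inj] by simp
  define v where "v j = restrict (\<lambda>i. \<alpha> j ^ (2 ^ i)) {..<h}" for j
  have vP: "v j \<in> P" for j by (simp add: v_def P_def)
  define H where "H t j = (SOME y. y \<in> P \<and> L y = v j) t" for t j
  have Hprop: "(\<Sum>t<h. H t j * \<alpha> (k + t) ^ (2 ^ i)) = \<alpha> j ^ (2 ^ i)" if i: "i < h" for i j
  proof -
    have "v j \<in> L ` P" using surj vP by simp
    then obtain y0 where "y0 \<in> P" "v j = L y0" by (rule imageE)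
    hence "\<exists>y. y \<in> P \<and> L y = v j" by auto
    hence "(SOME y. y \<in> P \<and> L y = v j) \<in> P \<and> L (SOME y. y \<in> P \<and> L y = v j) = v j" by (rule someI_ex)
    moreover have "(\<lambda>t. H t j) = (SOME y. y \<in> P \<and> L y = v j)" by (simp add: H_def)
    ultimately have "L (\<lambda>t. H t j) = v j" by simp
    from fun_cong[OF this, of i] show ?thesis using i by (simp add: L_def v_def)
  qed
  have "\<forall>x. \<forall>i<h. (\<Sum>j<k+h. dh_symbol k h H x j * \<alpha> j ^ (2 ^ i)) = 0"
  proof (intro allI impI)
    fix x i assume i: "i < h"
    have "(\<Sum>j<k+h. dh_symbol k h H x j * \<alpha> j ^ (2 ^ i)) =
      (\<Sum>j<k. x j * \<alpha> j ^ (2 ^ i)) + (\<Sum>t<h. (\<Sum>j<k. H t j * x j) * \<alpha> (k + t) ^ (2 ^ i))"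
      by (simp add: sum_split_add dh_symbol_def)
    also have "(\<Sum>t<h. (\<Sum>j<k. H t j * x j) * \<alpha> (k + t) ^ (2 ^ i)) =
       (\<Sum>j<k. x j * (\<Sum>t<h. H t j * \<alpha> (k + t) ^ (2 ^ i)))"
      unfolding sum_distrib_right sum_distrib_left by (subst sum.swap) (simp add: mult_ac)
    also have "\<dots> = (\<Sum>j<k. x j * \<alpha> j ^ (2 ^ i))" using Hprop[OF i] by simp
    finally show "(\<Sum>j<k+h. dh_symbol k h H x j * \<alpha> j ^ (2 ^ i)) = 0"
      using c2_add_self[OF c2] by simp
  qed
  thus ?thesis by blast
qed




locale mrsetup =
  fixes k r h :: nat and H :: "nat \<Rightarrow> nat \<Rightarrow> 'a::{field,finite}" and \<alpha> :: "nat \<Rightarrow> 'a" and E :: "nat set"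
  assumes c2: "1 + 1 = (0::'a)" and kpos: "k > 0" and rpos: "r > 0" and hpos: "h > 0"
    and dvd: "r dvd (k + h)"
    and bch: "\<forall>A \<subseteq> {..<k+h}. A \<noteq> {} \<longrightarrow> card A \<le> 2 * h \<longrightarrow> sum \<alpha> A \<noteq> 0"
    and par: "\<forall>x. \<forall>i<h. (\<Sum>j<k+h. dh_symbol k h H x j * \<alpha> j ^ (2 ^ i)) = 0"
    and Esub: "E \<subseteq> {..<code_length k r h}"
    and Ecard: "\<forall>l<(k + h) div r. card (E \<inter> local_group k h (\<lambda>j. j div r) l) = 1"
begin

abbreviation "N \<equiv> k + h"
abbreviation "G \<equiv> (k + h) div r"
abbreviation "n \<equiv> code_length k r h"
abbreviation "LG l \<equiv> local_group k h (\<lambda>j. j div r) l"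
abbreviation "enc x u \<equiv> lrc_encode k r h H (\<lambda>j. j div r) x u"
abbreviation "cc x j \<equiv> dh_symbol k h H x j"

definition grp :: "nat \<Rightarrow> nat" where "grp u = (if u < N then u div r else u - N)"
definition Gs :: "nat \<Rightarrow> nat set" where "Gs l = {j. j < N \<and> j div r = l}"
definition e :: "nat \<Rightarrow> nat" where "e l = (SOME u. E \<inter> LG l = {u})"
definition U :: "nat set" where "U = {..<n} - E"
definition \<beta> :: "nat \<Rightarrow> 'a" where
  "\<beta> u = (if u < N then (if e (u div r) < N then \<alpha> u + \<alpha> (e (u div r)) else \<alpha> u) else \<alpha> (e (u - N)))"

lemma two0: "(2::'a) = 0" using c2 by (metis one_add_one)

lemma n_eq: "n = N + G" by (simp add: code_length_def)

lemma div_lt: "j < N \<Longrightarrow> j div r < G"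
proof -
  assume j: "j < N"
  obtain g where "N = r * g" using dvd by blast
  thus ?thesis using j rpos by (simp add: less_mult_imp_div_less mult.commute)
qed

lemma LG_eq: "LG l = Gs l \<union> {N + l}" by (auto simp: local_group_def Gs_def)

lemma Gs_lt: "j \<in> Gs l \<Longrightarrow> j < N" by (simp add: Gs_def)

lemma grp_lt: "u < n \<Longrightarrow> grp u < G" using div_lt by (auto simp: grp_def n_eq)

lemma mem_LG: "l < G \<Longrightarrow> u \<in> LG l \<longleftrightarrow> u < n \<and> grp u = l"
  by (auto simp: LG_eq Gs_def grp_def n_eq split: if_splits)

lemma e_prop: "l < G \<Longrightarrow> E \<inter> LG l = {e l}"
proof -
  assume l: "l < G"
  hence "card (E \<inter> LG l) = 1" using Ecard by blast
  then obtain u where u: "E \<inter> LG l = {u}" by (rule card_1_singletonE)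
  hence "E \<inter> LG l = {SOME u. E \<inter> LG l = {u}}" by (rule someI)
  thus ?thesis by (simp add: e_def)
qed

lemma e_in: "l < G \<Longrightarrow> e l \<in> E \<and> e l \<in> LG l" using e_prop by blast

lemma e_n: "l < G \<Longrightarrow> e l < n \<and> grp (e l) = l" using e_in mem_LG by blast

lemma E_char: "u \<in> E \<longleftrightarrow> u < n \<and> u = e (grp u)"
proof
  assume u: "u \<in> E"
  hence un: "u < n" using Esub by auto
  hence "u \<in> LG (grp u)" using mem_LG grp_lt by blast
  hence "u \<in> E \<inter> LG (grp u)" using u by simp
  thus "u < n \<and> u = e (grp u)" using e_prop[OF grp_lt[OF un]] un by simp
next
  assume "u < n \<and> u = e (grp u)"
  thus "u \<in> E" using e_in grp_lt by metis
qed

lemma U_char: "u \<in> U \<longleftrightarrow> u < n \<and> u \<noteq> e (grp u)"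
  using E_char by (auto simp: U_def)

lemma e_cases: "l < G \<Longrightarrow> (e l < N \<and> e l \<in> Gs l \<and> e l div r = l) \<or> e l = N + l"
  using e_in by (auto simp: LG_eq Gs_def)

lemma enc_sym: "u < N \<Longrightarrow> enc x u = cc x u" by (simp add: lrc_encode_def)

lemma enc_par: "l < G \<Longrightarrow> enc x (N + l) = sum (cc x) (Gs l)"
  by (simp add: lrc_encode_def n_eq Gs_def code_length_def)

lemma grp_sym: "u < N \<Longrightarrow> grp u = u div r" by (simp add: grp_def)

lemma group_sum: "S \<subseteq> {..<n} \<Longrightarrow> sum f S = (\<Sum>l<G. sum f {u\<in>S. grp u = l})"
proof -
  assume S: "S \<subseteq> {..<n}"
  hence fS: "finite S" using finite_subset by blast
  have "grp ` S \<subseteq> {..<G}" using S grp_lt by auto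
  from sum.group[OF fS _ this, of f] show ?thesis by simp
qed

lemma U_slice: "l < G \<Longrightarrow> {u\<in>U. grp u = l} = LG l - {e l}"
  using mem_LG U_char by auto

lemma Gs_slice: "{u\<in>{..<N}. grp u = l} = Gs l" by (auto simp: Gs_def grp_def)


lemma key_id: "(\<Sum>u\<in>U. enc x u * \<beta> u ^ (2 ^ i)) = (\<Sum>j<N. cc x j * \<alpha> j ^ (2 ^ i))"
proof -
  define a where "a j = \<alpha> j ^ (2 ^ i)" for j
  have fr: "(y + z) ^ (2 ^ i) = y ^ (2 ^ i) + z ^ (2 ^ i)" for y z :: 'a using c2_frob[OF c2] .
  have Un: "U \<subseteq> {..<n}" by (auto simp: U_def)
  have Nn: "{..<N} \<subseteq> {..<n}" by (auto simp: n_eq)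
  have L: "(\<Sum>u\<in>U. enc x u * \<beta> u ^ (2 ^ i)) = (\<Sum>l<G. \<Sum>u\<in>LG l - {e l}. enc x u * \<beta> u ^ (2 ^ i))"
    using group_sum[OF Un] U_slice by simp
  have R: "(\<Sum>j<N. cc x j * \<alpha> j ^ (2 ^ i)) = (\<Sum>l<G. \<Sum>j\<in>Gs l. cc x j * a j)"
    using group_sum[OF Nn] Gs_slice by (simp add: a_def)
  have "(\<Sum>u\<in>LG l - {e l}. enc x u * \<beta> u ^ (2 ^ i)) = (\<Sum>j\<in>Gs l. cc x j * a j)" if l: "l < G" for l
  proof (cases "e l = N + l")
    case True
    have "LG l - {e l} = Gs l" using True by (auto simp: LG_eq Gs_def)
    moreover have "enc x u * \<beta> u ^ (2 ^ i) = cc x u * a u" if "u \<in> Gs l" for u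
      using that True by (simp add: enc_sym Gs_def \<beta>_def a_def)
    ultimately show ?thesis by simp
  next
    case False
    then have el: "e l < N" "e l \<in> Gs l" "e l div r = l" using e_cases[OF l] by auto
    let ?e = "e l" and ?D = "Gs l - {e l}"
    have fD: "finite ?D" by (simp add: Gs_def)
    have NlD: "N + l \<notin> ?D" by (simp add: Gs_def)
    have set: "LG l - {e l} = insert (N + l) ?D" using el by (auto simp: LG_eq)
    have bD: "enc x u * \<beta> u ^ (2 ^ i) = cc x u * a u + cc x u * a ?e" if "u \<in> ?D" for u
      using that el by (simp add: enc_sym Gs_def \<beta>_def a_def fr distrib_left)
    have bN: "enc x (N + l) * \<beta> (N + l) ^ (2 ^ i) = (cc x ?e + sum (cc x) ?D) * a ?e"
      using enc_par[OF l] sum.remove[of "Gs l" ?e "cc x"] el by (simp add: \<beta>_def a_def Gs_def)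
    have "(\<Sum>u\<in>LG l - {e l}. enc x u * \<beta> u ^ (2 ^ i)) =
        (cc x ?e + sum (cc x) ?D) * a ?e + (\<Sum>u\<in>?D. cc x u * a u + cc x u * a ?e)"
      unfolding set using fD NlD bD bN by simp
    also have "\<dots> = cc x ?e * a ?e + (\<Sum>u\<in>?D. cc x u * a u) + (sum (cc x) ?D * a ?e + sum (cc x) ?D * a ?e)"
      by (simp add: sum.distrib sum_distrib_right[symmetric] algebra_simps)
    also have "\<dots> = cc x ?e * a ?e + (\<Sum>u\<in>?D. cc x u * a u)" using c2_add_self[OF c2, of "sum (cc x) ?D * a ?e"] by simp
    also have "\<dots> = (\<Sum>j\<in>Gs l. cc x j * a j)" using sum.remove[of "Gs l" ?e "\<lambda>j. cc x j * a j"] el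
      by (simp add: Gs_def)
    finally show ?thesis .
  qed
  thus ?thesis using L R by simp
qed


lemma indep:
  assumes S: "S \<subseteq> U" "S \<noteq> {}" "card S \<le> h"
  shows "sum \<beta> S \<noteq> 0"
proof -
  define Sl where "Sl l = {u\<in>S. grp u = l}" for l
  define L where "L = {l. l < G \<and> e l < N \<and> odd (card (Sl l))}"
  define A where "A = (S \<inter> {..<N}) \<union> e ` L"
  have SU: "S \<subseteq> {..<n}" using S(1) by (auto simp: U_def)
  have fS: "finite S" using SU finite_subset by blast
  have eL: "l < G \<and> e l < N \<and> e l div r = l \<and> e l \<notin> S" if "l \<in> L" for l
    using that e_cases[of l] e_in[of l] S(1) by (auto simp: L_def U_def)
  have AN: "A \<subseteq> {..<N}" using eL by (auto simp: A_def)
  have An: "A \<subseteq> {..<n}" using AN by (auto simp: n_eq)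
  have fA: "finite A" using AN finite_subset by blast
  have slice: "sum \<beta> (Sl l) = sum \<alpha> {j\<in>A. grp j = l}" if l: "l < G" for l
  proof -
    define T where "T = {u\<in>S. u < N \<and> u div r = l}"
    have fT: "finite T" using fS by (simp add: T_def)
    have Aslice: "{j\<in>A. grp j = l} = T \<union> (if l \<in> L then {e l} else {})"
    proof (intro equalityI subsetI)
      fix j assume j: "j \<in> {j\<in>A. grp j = l}"
      show "j \<in> T \<union> (if l \<in> L then {e l} else {})"
      proof (cases "j \<in> S \<inter> {..<N}")
        case True thus ?thesis using j by (auto simp: T_def grp_sym)
      next
        case False
        then obtain l' where l': "l' \<in> L" "j = e l'" using j by (auto simp: A_def)
        hence "grp j = l'" using e_n eL by blast
        thus ?thesis using j l' by auto
      qed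
    next
      fix j assume j: "j \<in> T \<union> (if l \<in> L then {e l} else {})"
      show "j \<in> {j\<in>A. grp j = l}"
      proof (cases "j \<in> T")
        case True thus ?thesis by (auto simp: T_def A_def grp_sym)
      next
        case False
        hence "l \<in> L" "j = e l" using j by (auto split: if_splits)
        thus ?thesis using e_n[of l] eL by (auto simp: A_def)
      qed
    qed
    show ?thesis
    proof (cases "e l = N + l")
      case True
      have "Sl l = T"
      proof (intro equalityI subsetI)
        fix u assume u: "u \<in> Sl l"
        hence uU: "u \<in> U" "grp u = l" using S(1) by (auto simp: Sl_def)
        hence "u \<noteq> N + l" using True U_char by auto
        hence "u < N" using uU(2) by (auto simp: grp_def split: if_splits)
        thus "u \<in> T" using u by (auto simp: Sl_def T_def grp_sym)
      next
        fix u assume "u \<in> T" thus "u \<in> Sl l" by (auto simp: Sl_def T_def grp_sym)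
      qed
      moreover have "l \<notin> L" using True by (auto simp: L_def)
      moreover have "\<beta> u = \<alpha> u" if "u \<in> T" for u using that True by (auto simp: T_def \<beta>_def)
      ultimately show ?thesis using Aslice by simp
    next
      case False
      hence el: "e l < N" "e l div r = l" using e_cases[OF l] by auto
      define P where "P = {u\<in>S. u = N + l}"
      have fP: "finite P" by (simp add: P_def)
      have SlTP: "Sl l = T \<union> P"
        by (auto simp: Sl_def T_def P_def grp_def split: if_splits)
      have disj: "T \<inter> P = {}" by (auto simp: T_def P_def)
      have cardSl: "card (Sl l) = card T + card P" using SlTP disj fT fP by (simp add: card_Un_disjoint)
      have bT: "sum \<beta> T = sum \<alpha> T + of_nat (card T) * \<alpha> (e l)"
      proof -
        have "sum \<beta> T = (\<Sum>u\<in>T. \<alpha> u + \<alpha> (e l))"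
          by (rule sum.cong) (auto simp: T_def \<beta>_def el)
        thus ?thesis by (simp add: sum.distrib)
      qed
      have bP: "sum \<beta> P = of_nat (card P) * \<alpha> (e l)"
      proof -
        have "sum \<beta> P = (\<Sum>u\<in>P. \<alpha> (e l))" by (rule sum.cong) (auto simp: P_def \<beta>_def)
        thus ?thesis by simp
      qed
      have "sum \<beta> (Sl l) = sum \<alpha> T + of_nat (card (Sl l)) * \<alpha> (e l)"
        using bT bP SlTP disj fT fP cardSl by (simp add: sum.union_disjoint distrib_right add.assoc)
      also have "\<dots> = sum \<alpha> {j\<in>A. grp j = l}"
      proof (cases "odd (card (Sl l))")
        case True
        hence lL: "l \<in> L" using l el by (simp add: L_def)
        hence "e l \<notin> T" using eL by (auto simp: T_def)
        thus ?thesis using Aslice lL True c2_of_nat[OF c2, of "card (Sl l)"] fT by (simp add: add.commute)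
      next
        case False
        hence "l \<notin> L" by (simp add: L_def)
        thus ?thesis using Aslice False c2_of_nat[OF c2, of "card (Sl l)"] by simp
      qed
      finally show ?thesis .
    qed
  qed
  have sumeq: "sum \<beta> S = sum \<alpha> A"
    using group_sum[OF SU, of \<beta>] group_sum[OF An, of \<alpha>] slice by (simp add: Sl_def)
  have Ane: "A \<noteq> {}"
  proof
    assume A0: "A = {}"
    obtain u where u: "u \<in> S" using S(2) by blast
    have SN: "S \<inter> {..<N} = {}" and L0: "L = {}" using A0 by (auto simp: A_def)
    hence uN: "\<not> u < N" using u by auto
    have un: "u < n" using u SU by auto
    define l where "l = grp u"
    have l: "l < G" using grp_lt[OF un] by (simp add: l_def)
    have ueq: "u = N + l" using uN by (simp add: l_def grp_def)
    have "u \<noteq> e l" using u S(1) U_char l_def by auto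
    hence el: "e l < N" using e_cases[OF l] ueq by auto
    have "Sl l = {u}"
    proof (intro equalityI subsetI)
      fix v assume v: "v \<in> Sl l"
      hence "\<not> v < N" using SN by (auto simp: Sl_def)
      hence "v = N + l" using v by (auto simp: Sl_def grp_def)
      thus "v \<in> {u}" using ueq by simp
    next
      fix v assume "v \<in> {u}" thus "v \<in> Sl l" using u by (simp add: Sl_def l_def)
    qed
    hence "l \<in> L" using l el by (simp add: L_def)
    thus False using L0 by simp
  qed
  have cardA: "card A \<le> 2 * h"
  proof -
    have "L \<subseteq> grp ` S"
    proof
      fix l assume "l \<in> L"
      hence "Sl l \<noteq> {}" by (auto simp: L_def)
      thus "l \<in> grp ` S" by (auto simp: Sl_def)
    qed
    hence "card L \<le> card S" using fS by (meson card_image_le card_mono finite_imageI le_trans)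
    moreover have "card (S \<inter> {..<N}) \<le> card S" using fS by (simp add: card_mono)
    moreover have "card A \<le> card (S \<inter> {..<N}) + card (e ` L)" unfolding A_def by (rule card_Un_le)
    moreover have "card (e ` L) \<le> card L" by (rule card_image_le) (simp add: L_def)
    ultimately show ?thesis using S(3) by linarith
  qed
  show ?thesis using bch AN Ane cardA sumeq by metis
qed


lemma weight_ge:
  assumes nz: "nonzero_message k x"
  shows "h + 1 \<le> punctured_weight k r h H (\<lambda>j. j div r) E x"
proof (rule ccontr)
  define W where "W = {i. i < n \<and> i \<notin> E \<and> enc x i \<noteq> 0}"
  assume "\<not> h + 1 \<le> punctured_weight k r h H (\<lambda>j. j div r) E x"
  hence cW: "card W \<le> h" by (simp add: punctured_weight_def W_def)
  have WU: "W \<subseteq> U" by (auto simp: W_def U_def)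
  have fU: "finite U" by (simp add: U_def)
  have fW: "finite W" using WU fU finite_subset by blast
  have indW: "\<forall>S\<subseteq>W. S \<noteq> {} \<longrightarrow> sum \<beta> S \<noteq> 0"
  proof (intro allI impI)
    fix S assume S: "S \<subseteq> W" "S \<noteq> {}"
    have "card S \<le> card W" using S fW by (simp add: card_mono)
    thus "sum \<beta> S \<noteq> 0" using indep[of S] S WU cW by auto
  qed
  have eqs: "\<forall>i<card W. (\<Sum>u\<in>W. enc x u * \<beta> u ^ (2 ^ i)) = 0"
  proof (intro allI impI)
    fix i assume "i < card W"
    hence i: "i < h" using cW by simp
    have "(\<Sum>u\<in>W. enc x u * \<beta> u ^ (2 ^ i)) = (\<Sum>u\<in>U. enc x u * \<beta> u ^ (2 ^ i))"
      by (rule sum.mono_neutral_left[OF fU WU]) (auto simp: W_def U_def)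
    also have "\<dots> = (\<Sum>j<N. cc x j * \<alpha> j ^ (2 ^ i))" by (rule key_id)
    also have "\<dots> = 0" using par i by blast
    finally show "(\<Sum>u\<in>W. enc x u * \<beta> u ^ (2 ^ i)) = 0" .
  qed
  have "\<forall>u\<in>W. enc x u = 0" using moore[OF c2 fW indW eqs] .
  hence allU: "\<forall>u\<in>U. enc x u = 0" by (auto simp: W_def U_def)
  obtain j where j: "j < k" "x j \<noteq> 0" using nz by (auto simp: nonzero_message_def)
  have cj: "cc x j = x j" using j by (simp add: dh_symbol_def)
  have jN: "j < N" using j by simp
  have jn: "j < n" using jN by (simp add: n_eq)
  have "cc x j = 0"
  proof (cases "j \<in> E")
    case False
    hence "j \<in> U" using jn by (simp add: U_def)
    hence "enc x j = 0" using allU by blast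
    thus ?thesis using enc_sym[OF jN, of x] by simp
  next
    case True
    define l where "l = grp j"
    have l: "l < G" using grp_lt[OF jn] by (simp add: l_def)
    have je: "j = e l" using True E_char l_def by blast
    have NlU: "N + l \<in> U" using l je jN by (simp add: U_char n_eq grp_def)
    have jG: "j \<in> Gs l" using jN by (simp add: Gs_def l_def grp_sym)
    have fG: "finite (Gs l)" by (simp add: Gs_def)
    have oth: "\<forall>j'\<in>Gs l - {j}. cc x j' = 0"
    proof
      fix j' assume j': "j' \<in> Gs l - {j}"
      hence "j' < N" "grp j' = l" by (auto simp: Gs_def grp_sym)
      hence "j' \<in> U" using j' je by (simp add: U_char n_eq)
      hence "enc x j' = 0" using allU by blast
      thus "cc x j' = 0" using enc_sym[OF \<open>j' < N\<close>, of x] by simp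
    qed
    have "0 = enc x (N + l)" using allU NlU by simp
    also have "\<dots> = sum (cc x) (Gs l)" using enc_par[OF l] .
    also have "\<dots> = cc x j + sum (cc x) (Gs l - {j})" using sum.remove[OF fG jG] .
    also have "\<dots> = cc x j" using oth by simp
    finally show ?thesis by simp
  qed
  thus False using cj j by simp
qed


lemma card_U: "card U = N"
proof -
  have Eeq: "E = e ` {..<G}"
  proof (intro equalityI subsetI)
    fix u assume u: "u \<in> E"
    hence "u < n" "u = e (grp u)" using E_char by auto
    thus "u \<in> e ` {..<G}" using grp_lt by blast
  next
    fix u assume "u \<in> e ` {..<G}" thus "u \<in> E" using e_in by auto
  qed
  have inj: "inj_on e {..<G}"
  proof (rule inj_onI)
    fix l1 l2 assume "l1 \<in> {..<G}" "l2 \<in> {..<G}" "e l1 = e l2"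
    thus "l1 = l2" using e_n by (metis lessThan_iff)
  qed
  have cE: "card E = G" using Eeq card_image[OF inj] by simp
  have "card U = card {..<n} - card E" unfolding U_def using Esub by (intro card_Diff_subset) (auto intro: finite_subset)
  thus ?thesis using cE by (simp add: n_eq)
qed

lemma weight_eq: "\<exists>x. nonzero_message k x \<and> punctured_weight k r h H (\<lambda>j. j div r) E x = h + 1"
proof -
  have "k - 1 \<le> card U" using card_U by simp
  then obtain T where T: "T \<subseteq> U" "card T = k - 1" by (metis obtain_subset_with_card_n)
  have fU: "finite U" by (simp add: U_def)
  have fT: "finite T" using T fU finite_subset by blast
  define M where "M = PiE {..<k} (\<lambda>_. UNIV::'a set)"
  define F where "F x = restrict (\<lambda>i. enc x i) T" for x
  define Q where "Q = card (UNIV::'a set)"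
  have Q2: "Q \<ge> 2"
  proof -
    have "card {0, 1::'a} \<le> Q" unfolding Q_def by (rule card_mono) auto
    thus ?thesis by simp
  qed
  have cM: "card M = Q ^ k" by (simp add: M_def card_PiE Q_def)
  have cP: "card (PiE T (\<lambda>_. UNIV::'a set)) = Q ^ (k - 1)" using fT T(2) by (simp add: card_PiE Q_def)
  have lt: "Q ^ (k - 1) < Q ^ k" using Q2 kpos by (intro power_strict_increasing) auto
  have FM: "F ` M \<subseteq> PiE T (\<lambda>_. UNIV::'a set)" by (auto simp: F_def)
  have "\<not> inj_on F M"
  proof
    assume "inj_on F M"
    hence "card M = card (F ` M)" by (simp add: card_image)
    also have "\<dots> \<le> card (PiE T (\<lambda>_. UNIV::'a set))" using FM by (intro card_mono) (auto simp: finite_PiE fT)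
    finally show False using cM cP lt by simp
  qed
  then obtain x y where xy: "x \<in> M" "y \<in> M" "x \<noteq> y" "F x = F y" by (auto simp: inj_on_def)
  define z where "z j = x j - y j" for j
  have nz: "nonzero_message k z"
  proof (rule ccontr)
    assume "\<not> nonzero_message k z"
    hence "\<forall>j<k. x j = y j" by (auto simp: nonzero_message_def z_def)
    hence "x = y" using xy(1,2) unfolding M_def by (intro PiE_ext) auto
    thus False using xy(3) by simp
  qed
  have zT: "enc z i = 0" if "i \<in> T" for i
  proof -
    have "enc x i = enc y i" using fun_cong[OF xy(4), of i] that by (simp add: F_def)
    thus ?thesis using enc_lin[of k r h H "\<lambda>j. j div r" x y i] by (simp add: z_def[abs_def])
  qed
  have "punctured_weight k r h H (\<lambda>j. j div r) E z \<le> card (U - T)"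
    unfolding punctured_weight_def
    by (rule card_mono) (use fU zT in \<open>auto simp: U_def\<close>)
  also have "card (U - T) = h + 1" using T fT card_U kpos by (simp add: card_Diff_subset)
  finally have "punctured_weight k r h H (\<lambda>j. j div r) E z = h + 1" using weight_ge[OF nz] by simp
  thus ?thesis using nz by blast
qed

lemma mds: "punctured_MDS k r h H (\<lambda>j. j div r) E"
  unfolding punctured_MDS_def
proof (intro conjI allI impI)
  fix x :: "nat \<Rightarrow> 'a" assume nz: "nonzero_message k x"
  have "h + 1 \<le> card {i. i < n \<and> i \<notin> E \<and> enc x i \<noteq> 0}"
    using weight_ge[OF nz] by (simp add: punctured_weight_def)
  hence "{i. i < n \<and> i \<notin> E \<and> enc x i \<noteq> 0} \<noteq> {}"
  proof (intro notI)
    assume "h + 1 \<le> card {i. i < n \<and> i \<notin> E \<and> enc x i \<noteq> 0}" "{i. i < n \<and> i \<notin> E \<and> enc x i \<noteq> 0} = {}"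
    thus False by (simp only: card.empty)
  qed
  thus "\<exists>i<n. i \<notin> E \<and> enc x i \<noteq> 0" by blast
next
  fix x :: "nat \<Rightarrow> 'a" assume "nonzero_message k x"
  thus "h + 1 \<le> punctured_weight k r h H (\<lambda>j. j div r) E x" by (rule weight_ge)
next
  show "\<exists>x. nonzero_message k x \<and> punctured_weight k r h H (\<lambda>j. j div r) E x = h + 1" by (rule weight_eq)
qed

end




theorem theorem12:
  fixes k r h :: nat
  assumes "k > 0" and "r > 0" and "h > 0" and "r dvd (k + h)"
    and "card (UNIV :: 'a::{field,finite} set) = 2 ^ (h * (LEAST m::nat. code_length k r h \<le> 2 ^ m - 1))"
  shows "\<exists>(H :: nat \<Rightarrow> nat \<Rightarrow> 'a) g. valid_partition k r h g \<and> maximally_recoverable k r h H g"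
proof -
  define m where "m = (LEAST m::nat. code_length k r h \<le> 2 ^ m - 1)"
  have ex: "\<exists>m::nat. code_length k r h \<le> 2 ^ m - 1"
  proof
    have "code_length k r h < 2 ^ code_length k r h" by (rule less_exp)
    thus "code_length k r h \<le> 2 ^ code_length k r h - 1" by linarith
  qed
  have mle: "code_length k r h \<le> 2 ^ m - 1" unfolding m_def by (rule LeastI_ex[OF ex])
  have Nle: "k + h \<le> code_length k r h" by (simp add: code_length_def)
  have N: "k + h < 2 ^ m" using mle Nle assms(1)
    by (metis add_gr_0 diff_less le_trans le_less_trans zero_less_one less_imp_le_nat zero_less_power pos2)
  have mpos: "m > 0"
  proof (rule ccontr)
    assume "\<not> m > 0" hence "m = 0" by simp
    thus False using mle Nle assms(1) by simp
  qed
  have card: "card (UNIV :: 'a set) = 2 ^ (h * m)" using assms(5) by (simp add: m_def)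
  have c2: "1 + 1 = (0::'a)" using fin_char2[OF card] assms(3) mpos by simp
  obtain \<alpha> :: "nat \<Rightarrow> 'a" where bch: "\<forall>A \<subseteq> {..<k+h}. A \<noteq> {} \<longrightarrow> card A \<le> 2 * h \<longrightarrow> sum \<alpha> A \<noteq> 0"
    using alpha_exists[OF card assms(3) mpos N] by blast
  obtain H :: "nat \<Rightarrow> nat \<Rightarrow> 'a" where par: "\<forall>x. \<forall>i<h. (\<Sum>j<k+h. dh_symbol k h H x j * \<alpha> j ^ (2 ^ i)) = 0"
    using H_exists[OF c2 bch] by blast
  have "maximally_recoverable k r h H (\<lambda>j. j div r)"
    unfolding maximally_recoverable_def
  proof (intro allI impI)
    fix E assume E: "E \<subseteq> {..<code_length k r h} \<and> (\<forall>l<(k + h) div r. card (E \<inter> local_group k h (\<lambda>j. j div r) l) = 1)"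
    have "mrsetup k r h H \<alpha> E"
      by (unfold_locales) (use c2 assms(1-4) bch par E in auto)
    thus "punctured_MDS k r h H (\<lambda>j. j div r) E" by (rule mrsetup.mds)
  qed
  thus ?thesis using valid_div[OF assms(2,4)] by blast
qed


end
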